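(* If $L$ is the random walk Laplacian of a connected graph $G$ with $n_0$ vertices and eigenvalues $\lambda_1\le\lambda_2\le\dots\le\lambda_{n_0}$, then $\|L\|_{2,s}\ge\lambda_{s-1}$.
   Context: $L=I-D^{-1}A$ with $A$ the adjacency matrix and $D$ the degree matrix. For a matrix $\Phi$, $\|\Phi\|_{2,s}:=\max_{S\subset[n_0],\,|S|=s}\|\Phi_S\|_{2}$, where $\Phi_S$ is the column submatrix indexed by $S$ and $\|\cdot\|_2$ is the spectral (operator) norm. *)

theory Defs
  imports "Jordan_Normal_Form.Char_Poly" "Jordan_Normal_Form.DL_Submatrix"
begin

definition adj_mat :: "nat \<Rightarrow> (nat \<Rightarrow> nat \<Rightarrow> bool) \<Rightarrow> real mat" where
  "adj_mat n E = mat n n (\<lambda>(i,j). if E i j then 1 else 0)"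

definition degree :: "nat \<Rightarrow> (nat \<Rightarrow> nat \<Rightarrow> bool) \<Rightarrow> nat \<Rightarrow> real" where
  "degree n E i = real (card {j. j < n \<and> E i j})"

definition deg_mat :: "nat \<Rightarrow> (nat \<Rightarrow> nat \<Rightarrow> bool) \<Rightarrow> real mat" where
  "deg_mat n E = mat n n (\<lambda>(i,j). if i = j then degree n E i else 0)"

definition rw_laplacian :: "nat \<Rightarrow> (nat \<Rightarrow> nat \<Rightarrow> bool) \<Rightarrow> real mat" where
  "rw_laplacian n E = 1\<^sub>m n - mat n n (\<lambda>(i,j). (if E i j then 1 else 0) / degree n E i)"

definition simple_graph :: "nat \<Rightarrow> (nat \<Rightarrow> nat \<Rightarrow> bool) \<Rightarrow> bool" where
  "simple_graph n E \<longleftrightarrow> (\<forall>i j. E i j \<longrightarrow> i < n \<and> j < n) \<and> (\<forall>i j. E i j \<longrightarrow> E j i) \<and> (\<forall>i. \<not> E i i)"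

definition connected_graph :: "nat \<Rightarrow> (nat \<Rightarrow> nat \<Rightarrow> bool) \<Rightarrow> bool" where
  "connected_graph n E \<longleftrightarrow> (\<forall>u v. u < n \<longrightarrow> v < n \<longrightarrow> E\<^sup>*\<^sup>* u v)"

definition vec_norm2 :: "real vec \<Rightarrow> real" where
  "vec_norm2 x = sqrt (x \<bullet> x)"

definition spectral_norm :: "real mat \<Rightarrow> real" where
  "spectral_norm M = Sup {vec_norm2 (M *\<^sub>v x) | x. x \<in> carrier_vec (dim_col M) \<and> vec_norm2 x = 1}"

definition col_sparse_norm :: "real mat \<Rightarrow> nat \<Rightarrow> real" where
  "col_sparse_norm M s = Max {spectral_norm (submatrix M UNIV S) | S. S \<subseteq> {0..<dim_col M} \<and> card S = s}"

end

theory Submission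
  imports Defs "Jordan_Normal_Form.Schur_Decomposition"
begin

definition ip :: "nat \<Rightarrow> (nat \<Rightarrow> real) \<Rightarrow> (nat \<Rightarrow> real) \<Rightarrow> real" where
  "ip n u v = (\<Sum>r<n. u r * v r)"

lemma ip_comm: "ip n u v = ip n v u"
  unfolding ip_def by (simp add: mult.commute)

lemma ip_self_nonneg: "ip n u u \<ge> 0"
  unfolding ip_def by (auto intro: sum_nonneg)

lemma ip_self_zero: "ip n u u = 0 \<Longrightarrow> r < n \<Longrightarrow> u r = 0"
  unfolding ip_def by (subst (asm) sum_nonneg_eq_0_iff) auto

lemma CS_sum:
  fixes a b :: "nat \<Rightarrow> real"
  shows "(\<Sum>r\<in>A. a r * b r)^2 \<le> (\<Sum>r\<in>A. a r * a r) * (\<Sum>r\<in>A. b r * b r)"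
proof (cases "finite A")
  case fin: True
  define aa where "aa = (\<Sum>r\<in>A. a r * a r)"
  define bb where "bb = (\<Sum>r\<in>A. b r * b r)"
  define ab where "ab = (\<Sum>r\<in>A. a r * b r)"
  have bb0: "bb \<ge> 0" unfolding bb_def by (auto intro: sum_nonneg)
  show ?thesis
  proof (cases "bb = 0")
    case True
    then have "\<forall>r\<in>A. b r * b r = 0" unfolding bb_def using fin
      by (subst (asm) sum_nonneg_eq_0_iff) auto
    then have "ab = 0" unfolding ab_def by (auto intro!: sum.neutral)
    then show ?thesis using True unfolding ab_def bb_def by simp
  next
    case False
    have "0 \<le> (\<Sum>r\<in>A. (bb * a r - ab * b r)^2)" by (auto intro: sum_nonneg)
    also have "\<dots> = (\<Sum>r\<in>A. bb*bb * (a r * a r) - 2*bb*ab * (a r * b r) + ab*ab*(b r * b r))"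
      by (rule sum.cong) (auto simp: power2_eq_square algebra_simps)
    also have "\<dots> = bb*bb*aa - 2*bb*ab*ab + ab*ab*bb"
      unfolding aa_def ab_def bb_def
      by (simp add: sum.distrib sum_subtractf sum_distrib_left)
    also have "\<dots> = bb * (bb*aa - ab*ab)" by (simp add: algebra_simps)
    finally have "0 \<le> bb * (bb*aa - ab*ab)" .
    then have "0 \<le> bb*aa - ab*ab" using bb0 False
      by (simp add: zero_le_mult_iff)
    then show ?thesis unfolding aa_def ab_def bb_def by (simp add: power2_eq_square algebra_simps)
  qed
qed simp

lemma CS_ip: "(ip n u v)^2 \<le> ip n u u * ip n v v"
  unfolding ip_def by (rule CS_sum)

definition spn :: "nat \<Rightarrow> (nat \<Rightarrow> nat \<Rightarrow> real) \<Rightarrow> nat \<Rightarrow> (nat \<Rightarrow> real) \<Rightarrow> bool" where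
  "spn n v j w \<longleftrightarrow> (\<exists>c. \<forall>r<n. w r = (\<Sum>i<j. c i * v i r))"

lemma spn_zero: "spn n v j (\<lambda>r. 0)"
  unfolding spn_def by (rule exI[of _ "\<lambda>_. 0"]) simp

lemma spn_cong: "spn n v j w \<Longrightarrow> (\<And>r. r < n \<Longrightarrow> w r = w' r) \<Longrightarrow> spn n v j w'"
  unfolding spn_def by metis

lemma spn_add: "spn n v j w \<Longrightarrow> spn n v j w' \<Longrightarrow> spn n v j (\<lambda>r. w r + w' r)"
  unfolding spn_def
proof (elim exE)
  fix c c' assume "\<forall>r<n. w r = (\<Sum>i<j. c i * v i r)" "\<forall>r<n. w' r = (\<Sum>i<j. c' i * v i r)"
  then show "\<exists>c. \<forall>r<n. w r + w' r = (\<Sum>i<j. c i * v i r)"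
    by (intro exI[of _ "\<lambda>i. c i + c' i"]) (simp add: sum.distrib distrib_right)
qed

lemma spn_scale: "spn n v j w \<Longrightarrow> spn n v j (\<lambda>r. a * w r)"
  unfolding spn_def
proof (elim exE)
  fix c assume "\<forall>r<n. w r = (\<Sum>i<j. c i * v i r)"
  then show "\<exists>c. \<forall>r<n. a * w r = (\<Sum>i<j. c i * v i r)"
    by (intro exI[of _ "\<lambda>i. a * c i"]) (simp add: sum_distrib_left mult.assoc)
qed

lemma spn_neg: "spn n v j w \<Longrightarrow> spn n v j (\<lambda>r. - w r)"
  using spn_scale[of n v j w "-1"] by simp

lemma spn_diff: "spn n v j w \<Longrightarrow> spn n v j w' \<Longrightarrow> spn n v j (\<lambda>r. w r - w' r)"
  using spn_add[OF _ spn_neg, of n v j w w'] by simp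

lemma spn_sum: "finite K \<Longrightarrow> (\<And>k. k \<in> K \<Longrightarrow> spn n v j (w k)) \<Longrightarrow> spn n v j (\<lambda>r. \<Sum>k\<in>K. g k * w k r)"
proof (induction K rule: finite_induct)
  case empty then show ?case by (simp add: spn_zero)
next
  case (insert x F)
  have "spn n v j (\<lambda>r. g x * w x r + (\<Sum>k\<in>F. g k * w k r))"
    by (rule spn_add[OF spn_scale]) (use insert in auto)
  then show ?case using insert by simp
qed

lemma spn_mono: "spn n v j w \<Longrightarrow> j \<le> j' \<Longrightarrow> spn n v j' w"
  unfolding spn_def
proof (elim exE)
  fix c assume c: "\<forall>r<n. w r = (\<Sum>i<j. c i * v i r)" and jj: "j \<le> j'"
  show "\<exists>c. \<forall>r<n. w r = (\<Sum>i<j'. c i * v i r)"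
  proof (intro exI[of _ "\<lambda>i. if i < j then c i else 0"] allI impI)
    fix r assume "r < n"
    have "(\<Sum>i<j'. (if i < j then c i else 0) * v i r) = (\<Sum>i<j. (if i < j then c i else 0) * v i r)"
      by (rule sum.mono_neutral_right) (use jj in auto)
    then show "w r = (\<Sum>i<j'. (if i < j then c i else 0) * v i r)" using c \<open>r < n\<close> by simp
  qed
qed

lemma spn_base: "i < j \<Longrightarrow> spn n v j (v i)"
  unfolding spn_def
proof (intro exI[of _ "\<lambda>k. if k = i then 1 else 0"] allI impI)
  fix r assume "i < j" "r < n"
  have "(\<Sum>k<j. (if k = i then 1 else 0) * v k r) = (\<Sum>k<j. (if k = i then v k r else 0))"
    by (rule sum.cong) auto
  then show "v i r = (\<Sum>k<j. (if k = i then 1 else 0) * v k r)"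
    using \<open>i < j\<close> by simp
qed

lemma spn_orth_zero:
  assumes "spn n q j w" and "\<And>i. i < j \<Longrightarrow> ip n (q i) w = 0" and "r < n"
  shows "w r = 0"
proof -
  obtain c where c: "\<And>r. r < n \<Longrightarrow> w r = (\<Sum>i<j. c i * q i r)" using assms(1) unfolding spn_def by blast
  have "ip n w w = (\<Sum>r<n. (\<Sum>i<j. c i * q i r) * w r)" unfolding ip_def by (rule sum.cong) (auto simp: c)
  also have "\<dots> = (\<Sum>i<j. c i * ip n (q i) w)"
    unfolding ip_def by (simp add: sum_distrib_right sum_distrib_left mult.assoc sum.swap[of _ "{..<n}"])
  also have "\<dots> = 0" using assms(2) by simp
  finally show ?thesis using ip_self_zero assms(3) by blast
qed

lemma ip_cong: "(\<And>r. r < n \<Longrightarrow> u r = u' r) \<Longrightarrow> (\<And>r. r < n \<Longrightarrow> v r = v' r) \<Longrightarrow> ip n u v = ip n u' v'"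
  unfolding ip_def by (rule sum.cong) auto

lemma ip_diff_right: "ip n u (\<lambda>r. f r - g r) = ip n u f - ip n u g"
  unfolding ip_def by (simp add: algebra_simps sum_subtractf)

lemma ip_scale_right: "ip n u (\<lambda>r. c * f r) = c * ip n u f"
  unfolding ip_def by (simp add: algebra_simps sum_distrib_left)

lemma ip_scale_left: "ip n (\<lambda>r. c * f r) u = c * ip n f u"
  unfolding ip_def by (simp add: algebra_simps sum_distrib_left)

lemma ip_sum_right: "ip n u (\<lambda>r. \<Sum>i\<in>I. c i * f i r) = (\<Sum>i\<in>I. c i * ip n u (f i))"
  unfolding ip_def by (simp add: sum_distrib_left sum_distrib_right sum.swap[of _ "{..<n}"] algebra_simps)

definition Nv :: "nat \<Rightarrow> (nat \<Rightarrow> nat \<Rightarrow> real) \<Rightarrow> (nat \<Rightarrow> real) \<Rightarrow> nat \<Rightarrow> real" where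
  "Nv n a v r = (\<Sum>k<n. a r k * v k)"

lemma Nv_sym:
  assumes "\<And>r k. r < n \<Longrightarrow> k < n \<Longrightarrow> a r k = a k r"
  shows "ip n u (Nv n a v) = ip n (Nv n a u) v"
proof -
  have "ip n u (Nv n a v) = (\<Sum>r<n. \<Sum>k<n. u r * a r k * v k)"
    unfolding ip_def Nv_def by (simp add: sum_distrib_left mult.assoc)
  also have "\<dots> = (\<Sum>k<n. \<Sum>r<n. u r * a r k * v k)" by (rule sum.swap)
  also have "\<dots> = (\<Sum>k<n. (\<Sum>r<n. a k r * u r) * v k)"
    by (rule sum.cong[OF refl], simp add: sum_distrib_right, rule sum.cong) (auto simp: assms)
  also have "\<dots> = ip n (Nv n a u) v" unfolding ip_def Nv_def ..
  finally show ?thesis .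
qed

lemma Nv_diff_sum: "Nv n a (\<lambda>k. f k - (\<Sum>i\<in>I. c i * g i k)) r = Nv n a f r - (\<Sum>i\<in>I. c i * Nv n a (g i) r)"
  unfolding Nv_def by (simp add: algebra_simps sum_subtractf sum_distrib_left sum.swap[of _ I])

primrec QQ :: "nat \<Rightarrow> (nat \<Rightarrow> nat \<Rightarrow> real) \<Rightarrow> nat \<Rightarrow> nat \<Rightarrow> nat \<Rightarrow> real" where
  "QQ n p 0 = (\<lambda>i r. 0)"
| "QQ n p (Suc j) = (QQ n p j)(j := (\<lambda>r. p j r - (\<Sum>i<j. (ip n (p j) (QQ n p j i) / ip n (QQ n p j i) (QQ n p j i)) * QQ n p j i r)))"

definition gsq :: "nat \<Rightarrow> (nat \<Rightarrow> nat \<Rightarrow> real) \<Rightarrow> nat \<Rightarrow> nat \<Rightarrow> real" where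
  "gsq n p i = QQ n p (Suc i) i"

lemma QQ_stable: "i < j \<Longrightarrow> QQ n p j i = gsq n p i"
proof (induction j)
  case 0 then show ?case by simp
next
  case (Suc j)
  then show ?case by (cases "i = j") (auto simp: gsq_def)
qed

lemma gsq_eq: "gsq n p j r = p j r - (\<Sum>i<j. (ip n (p j) (gsq n p i) / ip n (gsq n p i) (gsq n p i)) * gsq n p i r)"
  unfolding gsq_def[of n p j] by (simp, rule sum.cong) (auto simp: QQ_stable)

lemma split_upto:
  fixes f :: "nat \<Rightarrow> real"
  assumes "j < n" "\<And>k. j < k \<Longrightarrow> k < n \<Longrightarrow> f k = 0"
  shows "(\<Sum>k<n. f k) = (\<Sum>k<j. f k) + f j"
proof -
  have "(\<Sum>k<n. f k) = (\<Sum>k<Suc j. f k)"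
    by (rule sum.mono_neutral_right) (use assms in auto)
  then show ?thesis by simp
qed

lemma spectral_gs:
  fixes n :: nat and a p b :: "nat \<Rightarrow> nat \<Rightarrow> real"
  assumes sym: "\<And>r k. r < n \<Longrightarrow> k < n \<Longrightarrow> a r k = a k r"
    and AP: "\<And>r j. r < n \<Longrightarrow> j < n \<Longrightarrow> Nv n a (p j) r = (\<Sum>k<n. b k j * p k r)"
    and UT: "\<And>i j. i < n \<Longrightarrow> j < i \<Longrightarrow> b i j = 0"
    and inj: "\<And>c. (\<And>r. r < n \<Longrightarrow> (\<Sum>j<n. c j * p j r) = 0) \<Longrightarrow> \<forall>j<n. c j = 0"
  defines "q \<equiv> gsq n p"
  shows "j < n \<Longrightarrow> (\<forall>i<j. ip n (q i) (q j) = 0) \<and> ip n (q j) (q j) > 0 \<and>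
     spn n p j (\<lambda>r. q j r - p j r) \<and> (\<forall>r<n. Nv n a (q j) r = b j j * q j r)"
proof (induction j rule: less_induct)
  case (less j)
  define t where "t i = ip n (p j) (q i) / ip n (q i) (q i)" for i
  have qe: "q j r = p j r - (\<Sum>i<j. t i * q i r)" for r
    unfolding q_def t_def by (rule gsq_eq)
  have IH: "\<And>i. i < j \<Longrightarrow> (\<forall>i'<i. ip n (q i') (q i) = 0) \<and> ip n (q i) (q i) > 0 \<and>
     spn n p i (\<lambda>r. q i r - p i r) \<and> (\<forall>r<n. Nv n a (q i) r = b i i * q i r)"
    using less by auto
  have pos: "\<And>i. i < j \<Longrightarrow> ip n (q i) (q i) > 0" using IH by blast
  have orth_prev: "\<And>i k. i < j \<Longrightarrow> k < j \<Longrightarrow> i \<noteq> k \<Longrightarrow> ip n (q i) (q k) = 0"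
  proof -
    fix i k assume "i < j" "k < j" "i \<noteq> k"
    then show "ip n (q i) (q k) = 0"
    proof (cases "i < k")
      case True then show ?thesis using IH[OF \<open>k < j\<close>] by blast
    next
      case False then have "k < i" using \<open>i \<noteq> k\<close> by simp
      then show ?thesis using IH[OF \<open>i < j\<close>] ip_comm by metis
    qed
  qed
  have PQ: "spn n q jj (\<lambda>r. p jj r - q jj r)" for jj
  proof -
    have "spn n q jj (\<lambda>r. \<Sum>i\<in>{..<jj}. (ip n (p jj) (q i) / ip n (q i) (q i)) * q i r)"
      by (rule spn_sum) (auto intro: spn_base)
    then show ?thesis
      by (rule spn_cong) (simp add: q_def gsq_eq[of n p jj])
  qed
  have O: "\<forall>k<j. ip n (q k) (q j) = 0"
  proof (intro allI impI)
    fix k assume k: "k < j"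
    have "ip n (q k) (q j) = ip n (q k) (\<lambda>r. p j r - (\<Sum>i\<in>{..<j}. t i * q i r))"
      by (rule ip_cong) (auto simp: qe)
    also have "\<dots> = ip n (q k) (p j) - (\<Sum>i<j. t i * ip n (q k) (q i))"
      by (simp add: ip_diff_right ip_sum_right)
    also have "(\<Sum>i<j. t i * ip n (q k) (q i)) = (\<Sum>i<j. if i = k then t k * ip n (q k) (q k) else 0)"
      by (rule sum.cong) (auto simp: orth_prev k)
    also have "\<dots> = t k * ip n (q k) (q k)" using k by simp
    also have "\<dots> = ip n (q k) (p j)" unfolding t_def using pos[OF k] by (simp add: ip_comm)
    finally show "ip n (q k) (q j) = 0" by simp
  qed
  have SP: "spn n p j (\<lambda>r. q j r - p j r)"
  proof -
    have qi: "spn n p j (q i)" if "i < j" for i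
    proof -
      have "spn n p j (\<lambda>r. (q i r - p i r) + p i r)"
        by (rule spn_add[OF spn_mono spn_base]) (use IH[OF that] that in auto)
      then show ?thesis by simp
    qed
    have "spn n p j (\<lambda>r. - (\<Sum>i\<in>{..<j}. t i * q i r))"
      by (rule spn_neg, rule spn_sum) (auto intro: qi)
    then show ?thesis by (rule spn_cong) (simp add: qe)
  qed
  have Z: "ip n (q j) (q j) > 0"
  proof (rule ccontr)
    assume "\<not> ip n (q j) (q j) > 0"
    then have "ip n (q j) (q j) = 0" using ip_self_nonneg[of n "q j"] by simp
    then have qz: "\<And>r. r < n \<Longrightarrow> q j r = 0" using ip_self_zero by blast
    obtain c where c: "\<And>r. r < n \<Longrightarrow> q j r - p j r = (\<Sum>i<j. c i * p i r)"
      using SP unfolding spn_def by blast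
    define cc where "cc l = (if l < j then c l else if l = j then 1 else 0)" for l
    have "\<forall>l<n. cc l = 0"
    proof (rule inj)
      fix r assume r: "r < n"
      have "(\<Sum>l<n. cc l * p l r) = (\<Sum>l<j. cc l * p l r) + cc j * p j r"
        by (rule split_upto) (use less.prems in \<open>auto simp: cc_def\<close>)
      also have "(\<Sum>l<j. cc l * p l r) = (\<Sum>l<j. c l * p l r)"
        by (rule sum.cong) (auto simp: cc_def)
      also have "\<dots> = - p j r" using c[OF r] qz[OF r] by simp
      finally show "(\<Sum>l<n. cc l * p l r) = 0" by (simp add: cc_def)
    qed
    then show False using less.prems by (auto simp: cc_def)
  qed
  have EV: "\<forall>r<n. Nv n a (q j) r = b j j * q j r"
  proof -
    define w where "w r = Nv n a (q j) r - b j j * q j r" for r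
    have pk: "spn n q j (p k)" if "k < j" for k
    proof -
      have "spn n q j (\<lambda>r. q k r + (p k r - q k r))"
        by (rule spn_add[OF spn_base spn_mono[OF PQ]]) (use that in auto)
      then show ?thesis by simp
    qed
    have w_eq: "w r = (\<Sum>k\<in>{..<j}. b k j * p k r) + b j j * (p j r - q j r)
        - (\<Sum>i\<in>{..<j}. (t i * b i i) * q i r)" if r: "r < n" for r
    proof -
      have "Nv n a (q j) r = Nv n a (\<lambda>k. p j k - (\<Sum>i\<in>{..<j}. t i * q i k)) r"
        unfolding Nv_def by (rule sum.cong) (auto simp: qe)
      also have "\<dots> = Nv n a (p j) r - (\<Sum>i\<in>{..<j}. t i * Nv n a (q i) r)" by (rule Nv_diff_sum)
      also have "(\<Sum>i\<in>{..<j}. t i * Nv n a (q i) r) = (\<Sum>i\<in>{..<j}. (t i * b i i) * q i r)"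
        by (rule sum.cong) (use IH r in auto)
      also have "Nv n a (p j) r = (\<Sum>k<n. b k j * p k r)" using AP r less.prems by blast
      also have "\<dots> = (\<Sum>k<j. b k j * p k r) + b j j * p j r"
        by (rule split_upto) (use less.prems UT in auto)
      finally show ?thesis unfolding w_def by (simp add: algebra_simps)
    qed
    have wspn: "spn n q j w"
    proof -
      have "spn n q j (\<lambda>r. (\<Sum>k\<in>{..<j}. b k j * p k r) + b j j * (p j r - q j r)
        - (\<Sum>i\<in>{..<j}. (t i * b i i) * q i r))"
        by (intro spn_diff spn_add spn_scale spn_sum PQ) (auto intro: pk spn_base)
      then show ?thesis by (rule spn_cong) (simp add: w_eq)
    qed
    have worth: "ip n (q k) w = 0" if k: "k < j" for k
    proof -
      have "ip n (q k) w = ip n (q k) (Nv n a (q j)) - b j j * ip n (q k) (q j)"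
        unfolding w_def by (simp add: ip_diff_right ip_scale_right)
      also have "ip n (q k) (Nv n a (q j)) = ip n (Nv n a (q k)) (q j)" by (rule Nv_sym[OF sym])
      also have "\<dots> = ip n (\<lambda>r. b k k * q k r) (q j)"
        by (rule ip_cong) (use IH[OF k] in auto)
      also have "\<dots> = b k k * ip n (q k) (q j)" by (rule ip_scale_left)
      finally show ?thesis using O k by simp
    qed
    show ?thesis using spn_orth_zero[OF wspn worth] unfolding w_def by auto
  qed
  show ?case using O Z SP EV by blast
qed

definition Rop :: "nat \<Rightarrow> (nat \<Rightarrow> nat \<Rightarrow> real) \<Rightarrow> (nat \<Rightarrow> real) \<Rightarrow> nat \<Rightarrow> real" where
  "Rop s a z r = (if r < s then (\<Sum>k<s. a r k * z k) else 0)"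

lemma sum_restrict_s:
  fixes f :: "nat \<Rightarrow> real"
  assumes "s \<le> n" "\<And>r. s \<le> r \<Longrightarrow> r < n \<Longrightarrow> f r = 0"
  shows "(\<Sum>r<n. f r) = (\<Sum>r<s. f r)"
  by (rule sum.mono_neutral_right) (use assms in auto)

lemma Rop_sym:
  assumes "s \<le> n" "\<And>r k. r < n \<Longrightarrow> k < n \<Longrightarrow> a r k = a k r"
  shows "ip n (Rop s a u) v = ip n u (Rop s a v)"
proof -
  have "ip n (Rop s a u) v = ip s (Nv s a u) v"
    unfolding ip_def by (subst sum_restrict_s[OF assms(1)]) (auto simp: Rop_def Nv_def)
  also have "\<dots> = ip s u (Nv s a v)" by (rule Nv_sym[symmetric]) (use assms in auto)
  also have "\<dots> = ip n u (Rop s a v)"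
    unfolding ip_def by (subst sum_restrict_s[OF assms(1), of "\<lambda>r. u r * Rop s a v r"]) (auto simp: Rop_def Nv_def)
  finally show ?thesis .
qed

lemma Rop_pow_sym:
  assumes "s \<le> n" "\<And>r k. r < n \<Longrightarrow> k < n \<Longrightarrow> a r k = a k r"
  shows "ip n ((Rop s a ^^ m) u) v = ip n u ((Rop s a ^^ m) v)"
proof (induction m arbitrary: v)
  case 0 then show ?case by simp
next
  case (Suc m)
  have "ip n ((Rop s a ^^ Suc m) u) v = ip n (Rop s a ((Rop s a ^^ m) u)) v" by simp
  also have "\<dots> = ip n ((Rop s a ^^ m) u) (Rop s a v)" by (rule Rop_sym[OF assms])
  also have "\<dots> = ip n u ((Rop s a ^^ m) (Rop s a v))" by (rule Suc)
  also have "\<dots> = ip n u ((Rop s a ^^ Suc m) v)" by (simp add: funpow_swap1)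
  finally show ?case .
qed

lemma power_argument:
  fixes n s :: nat and nf lf :: "nat \<Rightarrow> nat \<Rightarrow> real" and dd y :: "nat \<Rightarrow> real" and A mu :: real
  assumes sn: "s \<le> n"
    and nf: "\<And>r k. r < n \<Longrightarrow> k < n \<Longrightarrow> nf r k = sqrt (dd r) * lf r k / sqrt (dd k)"
    and dd1: "\<And>r. r < n \<Longrightarrow> dd r \<ge> 1" and ddn: "\<And>r. r < n \<Longrightarrow> dd r \<le> n"
    and sym: "\<And>r k. r < n \<Longrightarrow> k < n \<Longrightarrow> nf r k = nf k r"
    and Gb: "\<And>w. ip n (Rop s lf w) (Rop s lf w) \<le> A^2 * ip n w w"
    and ysupp: "\<And>r. s \<le> r \<Longrightarrow> r < n \<Longrightarrow> y r = 0"
    and Ypos: "ip n y y > 0"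
    and ray: "ip n (Nv n nf y) y \<ge> mu * ip n y y"
    and A0: "A \<ge> 0"
  shows "mu \<le> A"
proof (rule ccontr)
  assume "\<not> mu \<le> A"
  then have muA: "mu > A" by simp
  then have mu0: "mu > 0" using A0 by simp
  define Y where "Y = ip n y y"
  define T where "T = Rop s nf"
  define G where "G = Rop s lf"
  define y' where "y' k = y k / sqrt (dd k)" for k
  define rr where "rr m = ip n ((T ^^ m) y) y" for m
  define sq where "sq m = ip n ((T ^^ m) y) ((T ^^ m) y)" for m
  have dpos: "r < n \<Longrightarrow> dd r > 0" for r using dd1[of r] by simp
  have rel: "(T ^^ m) y r = sqrt (dd r) * (G ^^ m) y' r" if "r < n" for m r
    using that
  proof (induction m arbitrary: r)
    case 0 then show ?case using dpos[of r] by (simp add: y'_def)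
  next
    case (Suc m)
    show ?case
    proof (cases "r < s")
      case True
      have "(T ^^ Suc m) y r = (\<Sum>k<s. nf r k * (T ^^ m) y k)" using True by (simp add: T_def Rop_def)
      also have "\<dots> = (\<Sum>k<s. sqrt (dd r) * (lf r k * (G ^^ m) y' k))"
      proof (rule sum.cong[OF refl])
        fix k assume "k \<in> {..<s}"
        then have k: "k < n" using sn by simp
        have "sqrt (dd k) > 0" using dpos[OF k] by simp
        then show "nf r k * (T ^^ m) y k = sqrt (dd r) * (lf r k * (G ^^ m) y' k)"
          using Suc.IH[OF k] nf[OF Suc.prems k] by (simp add: field_simps)
      qed
      also have "\<dots> = sqrt (dd r) * (G ^^ Suc m) y' r"
        using True by (simp add: G_def Rop_def sum_distrib_left)
      finally show ?thesis .
    qed (simp add: T_def G_def Rop_def)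
  qed
  have Gpow: "ip n ((G ^^ m) w) ((G ^^ m) w) \<le> (A^2)^m * ip n w w" for m w
  proof (induction m)
    case 0 then show ?case by simp
  next
    case (Suc m)
    have "ip n ((G ^^ Suc m) w) ((G ^^ Suc m) w) \<le> A^2 * ip n ((G ^^ m) w) ((G ^^ m) w)"
      using Gb unfolding G_def by simp
    also have "\<dots> \<le> A^2 * ((A^2)^m * ip n w w)" by (rule mult_left_mono[OF Suc]) simp
    finally show ?case by simp
  qed
  have y'Y: "ip n y' y' \<le> Y"
    unfolding ip_def Y_def
  proof (rule sum_mono)
    fix r assume "r \<in> {..<n}"
    then have "dd r \<ge> 1" using dd1 by simp
    then show "y' r * y' r \<le> y r * y r"
      unfolding y'_def by (simp add: field_simps mult_le_cancel_left1 mult_le_cancel_right1 zero_le_mult_iff)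
  qed
  have sqle: "sq m \<le> n * (A^2)^m * Y" for m
  proof -
    have "sq m = (\<Sum>r<n. dd r * ((G ^^ m) y' r * (G ^^ m) y' r))"
      unfolding sq_def ip_def by (rule sum.cong) (auto simp: rel dpos less_imp_le)
    also have "\<dots> \<le> (\<Sum>r<n. real n * ((G ^^ m) y' r * (G ^^ m) y' r))"
      by (rule sum_mono, rule mult_right_mono) (auto simp: ddn)
    also have "\<dots> = n * ip n ((G ^^ m) y') ((G ^^ m) y')" unfolding ip_def by (simp add: sum_distrib_left)
    also have "\<dots> \<le> n * ((A^2)^m * ip n y' y')" by (rule mult_left_mono[OF Gpow]) simp
    also have "\<dots> \<le> n * ((A^2)^m * Y)" by (intro mult_left_mono y'Y) auto
    finally show ?thesis by simp
  qed
  have rr2: "rr (m + m) = sq m" for m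
  proof -
    have "rr (m + m) = ip n ((T ^^ m) ((T ^^ m) y)) y" unfolding rr_def by (simp add: funpow_add)
    also have "\<dots> = sq m" unfolding sq_def T_def by (rule Rop_pow_sym[OF sn sym])
    finally show ?thesis .
  qed
  have CS: "(rr m)^2 \<le> sq m * Y" for m unfolding rr_def sq_def Y_def by (rule CS_ip)
  have rr1: "rr 1 \<ge> mu * Y"
  proof -
    have "rr 1 = ip n (Nv n nf y) y"
      unfolding rr_def ip_def
    proof (rule sum.cong[OF refl])
      fix r assume "r \<in> {..<n}"
      then have r: "r < n" by simp
      have "Nv n nf y r = (\<Sum>k<s. nf r k * y k)"
        unfolding Nv_def by (rule sum_restrict_s[OF sn]) (use ysupp in auto)
      then show "(T ^^ 1) y r * y r = Nv n nf y r * y r"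
        using ysupp[of r] r by (cases "r < s") (auto simp: T_def Rop_def)
    qed
    then show ?thesis using ray unfolding Y_def by simp
  qed
  have Y0: "Y > 0" using Ypos unfolding Y_def .
  have pw: "rr (2^j) \<ge> mu^(2^j) * Y" for j
  proof (induction j)
    case 0 then show ?case using rr1 by simp
  next
    case (Suc j)
    let ?m = "2^j :: nat"
    have "0 \<le> mu^?m * Y" using mu0 Y0 by simp
    then have "(mu^?m * Y)^2 \<le> (rr ?m)^2" using Suc by (intro power_mono) auto
    also have "\<dots> \<le> sq ?m * Y" by (rule CS)
    finally have "mu^(2*?m) * Y * Y \<le> sq ?m * Y" by (simp add: power2_eq_square power_mult algebra_simps)
    then have "mu^(2*?m) * Y \<le> sq ?m" using Y0 by simp
    then show ?case using rr2[of ?m] by (simp add: mult_2)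
  qed
  have key: "(mu^2)^(2^j) \<le> n * (A^2)^(2^j)" for j
  proof -
    let ?m = "2^j :: nat"
    have "mu^(2*?m) * Y \<le> rr (2^Suc j)" using pw[of "Suc j"] by simp
    also have "\<dots> = sq ?m" using rr2[of ?m] by (simp add: mult_2)
    also have "\<dots> \<le> n * (A^2)^?m * Y" by (rule sqle)
    finally have "mu^(2*?m) \<le> n * (A^2)^?m" using Y0 by simp
    then show ?thesis by (simp add: power_mult)
  qed
  show False
  proof (cases "A = 0")
    case True
    then show False using key[of 0] mu0 by simp
  next
    case False
    then have Ap: "A > 0" using A0 by simp
    define x where "x = mu^2 / A^2 - 1"
    have "mu^2 > A^2" using muA A0 by (simp add: power_strict_mono)
    then have x0: "x > 0" using Ap unfolding x_def by (simp add: field_simps)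
    define j where "j = nat \<lceil>n / x\<rceil>"
    have "n / x \<le> real j" unfolding j_def by (rule real_nat_ceiling_ge)
    also have "real j < real (2^j)" by (simp add: less_exp del: of_nat_power)
    finally have "n / x < 2^j" by simp
    then have "n < 2^j * x" using x0 by (simp add: field_simps)
    then have "1 + n < 1 + real (2^j) * x" by simp
    also have "\<dots> \<le> (1 + x)^(2^j)" by (rule Bernoulli_inequality) (use x0 in simp)
    also have "\<dots> = (mu^2)^(2^j) / (A^2)^(2^j)" unfolding x_def using Ap by (simp add: power_divide)
    also have "\<dots> \<le> n" using key[of j] Ap by (simp add: divide_le_eq)
    finally show False by simp
  qed
qed

lemma sprod_sum: "(v :: real vec) \<bullet> w = (\<Sum>i<dim_vec w. v $ i * w $ i)"
  unfolding scalar_prod_def by (simp add: atLeast0LessThan)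

lemma self_sprod_nonneg: "(x :: real vec) \<bullet> x \<ge> 0"
  unfolding scalar_prod_def by (auto intro: sum_nonneg)

lemma vec_norm2_sq: "(vec_norm2 x)^2 = x \<bullet> x"
  unfolding vec_norm2_def using self_sprod_nonneg[of x] by simp

lemma vec_norm2_nonneg: "vec_norm2 x \<ge> 0"
  unfolding vec_norm2_def using self_sprod_nonneg[of x] by simp

lemma mult_vec_idx:
  assumes "(M :: real mat) \<in> carrier_mat nr nc" "x \<in> carrier_vec nc" "i < nr"
  shows "(M *\<^sub>v x) $ i = (\<Sum>k<nc. M $$ (i,k) * x $ k)"
proof -
  have "(M *\<^sub>v x) $ i = row M i \<bullet> x" using assms by simp
  also have "\<dots> = (\<Sum>k<nc. row M i $ k * x $ k)" using assms by (simp add: sprod_sum)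
  also have "\<dots> = (\<Sum>k<nc. M $$ (i,k) * x $ k)" by (rule sum.cong) (use assms in auto)
  finally show ?thesis .
qed

lemma spec_bdd:
  assumes M: "(M :: real mat) \<in> carrier_mat nr nc"
  shows "bdd_above {vec_norm2 (M *\<^sub>v x) | x. x \<in> carrier_vec (dim_col M) \<and> vec_norm2 x = 1}"
proof -
  define F where "F = (\<Sum>i<nr. \<Sum>k<nc. M $$ (i,k) * M $$ (i,k))"
  show ?thesis
  proof (rule bdd_aboveI[of _ "sqrt F"], clarify)
    fix x :: "real vec" assume x: "x \<in> carrier_vec (dim_col M)" and nx: "vec_norm2 x = 1"
    have xc: "x \<in> carrier_vec nc" using x M by simp
    have xx: "(\<Sum>k<nc. x $ k * x $ k) = 1" using vec_norm2_sq[of x] nx xc by (simp add: sprod_sum)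
    have "(M *\<^sub>v x) \<bullet> (M *\<^sub>v x) = (\<Sum>i<nr. (\<Sum>k<nc. M $$ (i,k) * x $ k)^2)"
    proof -
      have "(M *\<^sub>v x) \<bullet> (M *\<^sub>v x) = (\<Sum>i<nr. ((M *\<^sub>v x) $ i)^2)"
        using M by (simp add: sprod_sum[of "M *\<^sub>v x"] power2_eq_square)
      also have "\<dots> = (\<Sum>i<nr. (\<Sum>k<nc. M $$ (i,k) * x $ k)^2)"
        by (rule sum.cong[OF refl], subst mult_vec_idx[OF M xc]) auto
      finally show ?thesis .
    qed
    also have "\<dots> \<le> (\<Sum>i<nr. (\<Sum>k<nc. M $$ (i,k) * M $$ (i,k)) * (\<Sum>k<nc. x $ k * x $ k))"
      by (rule sum_mono, rule CS_sum)
    also have "\<dots> = F" unfolding F_def xx by simp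
    finally have "(vec_norm2 (M *\<^sub>v x))^2 \<le> F" by (simp add: vec_norm2_sq)
    then show "vec_norm2 (M *\<^sub>v x) \<le> sqrt F"
      using vec_norm2_nonneg real_le_rsqrt by blast
  qed
qed

lemma vec_norm2_zero: "x \<in> carrier_vec n \<Longrightarrow> vec_norm2 x = 0 \<Longrightarrow> x = 0\<^sub>v n"
proof -
  assume x: "x \<in> carrier_vec n" and z: "vec_norm2 x = 0"
  then have "(\<Sum>i<n. x $ i * x $ i) = 0" using vec_norm2_sq[of x] by (simp add: sprod_sum)
  then have "\<forall>i<n. x $ i * x $ i = 0" by (subst (asm) sum_nonneg_eq_0_iff) auto
  then show ?thesis using x by (intro eq_vecI) auto
qed

lemma vec_norm2_smult: "vec_norm2 (c \<cdot>\<^sub>v x) = \<bar>c\<bar> * vec_norm2 x"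
proof -
  have "(c \<cdot>\<^sub>v x) \<bullet> (c \<cdot>\<^sub>v x) = c^2 * (x \<bullet> x)"
    by (simp add: sprod_sum sum_distrib_left power2_eq_square algebra_simps)
  then show ?thesis unfolding vec_norm2_def by (simp add: real_sqrt_mult)
qed

lemma spectral_bound:
  assumes M: "(M :: real mat) \<in> carrier_mat nr nc" and x: "x \<in> carrier_vec nc"
  shows "vec_norm2 (M *\<^sub>v x) \<le> spectral_norm M * vec_norm2 x"
proof (cases "vec_norm2 x = 0")
  case True
  then have "x = 0\<^sub>v nc" using vec_norm2_zero x by blast
  then have "M *\<^sub>v x = 0\<^sub>v nr" using M by (intro eq_vecI) (auto simp: mult_vec_idx)
  then show ?thesis using True by (simp add: vec_norm2_def)
next
  case False
  define c where "c = 1 / vec_norm2 x"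
  have cp: "c > 0" using False vec_norm2_nonneg[of x] unfolding c_def by simp
  have u: "c \<cdot>\<^sub>v x \<in> carrier_vec (dim_col M)" using x M by simp
  have nu: "vec_norm2 (c \<cdot>\<^sub>v x) = 1" using cp False by (simp add: vec_norm2_smult c_def)
  have "vec_norm2 (M *\<^sub>v (c \<cdot>\<^sub>v x)) \<le> spectral_norm M"
    unfolding spectral_norm_def by (rule cSup_upper[OF _ spec_bdd[OF M]]) (use u nu in blast)
  moreover have "M *\<^sub>v (c \<cdot>\<^sub>v x) = c \<cdot>\<^sub>v (M *\<^sub>v x)" using M x by (simp add: mult_mat_vec)
  ultimately have "c * vec_norm2 (M *\<^sub>v x) \<le> spectral_norm M" using cp by (simp add: vec_norm2_smult)
  then show ?thesis using cp False vec_norm2_nonneg[of x] unfolding c_def by (simp add: field_simps)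
qed

lemma spectral_nonneg:
  assumes M: "(M :: real mat) \<in> carrier_mat nr nc" and nc: "nc > 0"
  shows "spectral_norm M \<ge> 0"
proof -
  have "unit_vec nc 0 \<in> carrier_vec (dim_col M)" using M by simp
  moreover have "vec_norm2 (unit_vec nc 0) = 1"
  proof -
    have "(\<Sum>i<nc. (if i = 0 then 1 else 0) * (if i = 0 then 1 else (0::real))) = (\<Sum>i<nc. if i = 0 then 1 else 0)"
      by (rule sum.cong) auto
    then show ?thesis unfolding vec_norm2_def using nc by (simp add: sprod_sum unit_vec_def)
  qed
  ultimately have "vec_norm2 (M *\<^sub>v unit_vec nc 0) \<le> spectral_norm M"
    unfolding spectral_norm_def by (intro cSup_upper[OF _ spec_bdd[OF M]]) blast
  then show ?thesis using vec_norm2_nonneg order_trans by blast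
qed

lemma diag_mult_left:
  fixes f :: "nat \<Rightarrow> real"
  assumes "A \<in> carrier_mat n m" "i < n" "j < m"
  shows "(mat n n (\<lambda>(i,j). if i = j then f i else 0) * A) $$ (i,j) = f i * (A $$ (i,j))"
proof -
  have "(mat n n (\<lambda>(i,j). if i = j then f i else 0) * A) $$ (i,j) = row (mat n n (\<lambda>(i,j). if i = j then f i else 0)) i \<bullet> col A j"
    using assms by simp
  also have "\<dots> = (\<Sum>k<n. row (mat n n (\<lambda>(i,j). if i = j then f i else 0)) i $ k * col A j $ k)"
    using assms by (simp add: sprod_sum)
  also have "\<dots> = (\<Sum>k<n. (if i = k then f i else 0) * A $$ (k,j))"
    by (rule sum.cong) (use assms in auto)
  also have "\<dots> = (\<Sum>k<n. if k = i then f i * A $$ (k,j) else 0)" by (rule sum.cong) auto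
  finally show ?thesis using assms by simp
qed

lemma diag_mult_right:
  fixes f :: "nat \<Rightarrow> real"
  assumes "A \<in> carrier_mat m n" "i < m" "j < n"
  shows "(A * mat n n (\<lambda>(i,j). if i = j then f i else 0)) $$ (i,j) = A $$ (i,j) * f j"
proof -
  have "(A * mat n n (\<lambda>(i,j). if i = j then f i else 0)) $$ (i,j) = row A i \<bullet> col (mat n n (\<lambda>(i,j). if i = j then f i else 0)) j"
    using assms by simp
  also have "\<dots> = (\<Sum>k<n. row A i $ k * col (mat n n (\<lambda>(i,j). if i = j then f i else 0)) j $ k)"
    using assms by (simp add: sprod_sum)
  also have "\<dots> = (\<Sum>k<n. A $$ (i,k) * (if k = j then f j else 0))"
    by (rule sum.cong) (use assms in auto)
  also have "\<dots> = (\<Sum>k<n. if k = j then A $$ (i,k) * f j else 0)" by (rule sum.cong) auto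
  finally show ?thesis using assms by simp
qed

lemma pick_init: "j < s \<Longrightarrow> pick {0..<s} j = j"
proof (induction j)
  case 0 then show ?case by (auto intro: Least_equality)
next
  case (Suc j) then show ?case by (auto intro: Least_equality)
qed

lemma orth_expand:
  assumes fin: "finite K" and orth: "\<And>i j. i \<in> K \<Longrightarrow> j \<in> K \<Longrightarrow> i \<noteq> j \<Longrightarrow> ip n (f i) (f j) = 0"
  shows "ip n (\<lambda>r. \<Sum>i\<in>K. c i * f i r) (\<lambda>r. \<Sum>j\<in>K. e j * f j r) = (\<Sum>i\<in>K. c i * e i * ip n (f i) (f i))"
proof -
  have "ip n (\<lambda>r. \<Sum>i\<in>K. c i * f i r) (\<lambda>r. \<Sum>j\<in>K. e j * f j r)
      = (\<Sum>j\<in>K. e j * ip n (\<lambda>r. \<Sum>i\<in>K. c i * f i r) (f j))" by (rule ip_sum_right)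
  also have "\<dots> = (\<Sum>j\<in>K. e j * (\<Sum>i\<in>K. c i * ip n (f j) (f i)))"
    by (simp add: ip_comm[of n "\<lambda>r. \<Sum>i\<in>K. c i * f i r"] ip_sum_right)
  also have "\<dots> = (\<Sum>j\<in>K. e j * (c j * ip n (f j) (f j)))"
  proof (rule sum.cong[OF refl])
    fix j assume j: "j \<in> K"
    have "(\<Sum>i\<in>K. c i * ip n (f j) (f i)) = (\<Sum>i\<in>K. if i = j then c j * ip n (f j) (f j) else 0)"
      by (rule sum.cong) (auto simp: orth j)
    also have "\<dots> = c j * ip n (f j) (f j)" using j fin by simp
    finally show "e j * (\<Sum>i\<in>K. c i * ip n (f j) (f i)) = e j * (c j * ip n (f j) (f j))" by simp
  qed
  finally show ?thesis by (simp add: algebra_simps)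
qed

lemma Nv_sum: "Nv n a (\<lambda>r. \<Sum>i\<in>K. c i * f i r) r = (\<Sum>i\<in>K. c i * Nv n a (f i) r)"
  unfolding Nv_def by (simp add: sum_distrib_left sum.swap[of _ K] algebra_simps)

lemma mult_idx:
  assumes "(A :: real mat) \<in> carrier_mat nr m" "B \<in> carrier_mat m nc" "i < nr" "j < nc"
  shows "(A * B) $$ (i,j) = (\<Sum>k<m. A $$ (i,k) * B $$ (k,j))"
proof -
  have "(A * B) $$ (i,j) = row A i \<bullet> col B j" using assms by simp
  also have "\<dots> = (\<Sum>k<m. row A i $ k * col B j $ k)" using assms by (simp add: sprod_sum)
  also have "\<dots> = (\<Sum>k<m. A $$ (i,k) * B $$ (k,j))" by (rule sum.cong) (use assms in auto)
  finally show ?thesis .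
qed

lemma L_carrier: "rw_laplacian n E \<in> carrier_mat n n"
  unfolding rw_laplacian_def carrier_mat_def by simp

lemma L_idx: "i < n \<Longrightarrow> j < n \<Longrightarrow> rw_laplacian n E $$ (i,j) =
   (if i = j then 1 else 0) - (if E i j then 1 else 0) / degree n E i"
  unfolding rw_laplacian_def by simp

lemma deg_ge1:
  assumes g: "simple_graph n E" and c: "connected_graph n E" and n2: "2 \<le> n" and r: "r < n"
  shows "1 \<le> degree n E r"
proof -
  define v where "v = (if r = 0 then 1 else (0::nat))"
  have v: "v < n" "v \<noteq> r" using n2 r unfolding v_def by auto
  have "E\<^sup>*\<^sup>* r v" using c v r unfolding connected_graph_def by blast
  then obtain k where k: "E r k"
    by (cases rule: converse_rtranclpE) (use v in auto)
  then have "k < n" using g unfolding simple_graph_def by blast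
  then have "k \<in> {j. j < n \<and> E r j}" using k by simp
  then have "card {j. j < n \<and> E r j} > 0"
    by (subst card_gt_0_iff) auto
  then show ?thesis unfolding degree_def by simp
qed

lemma deg_le: "degree n E r \<le> n"
proof -
  have "card {j. j < n \<and> E r j} \<le> card {..<n}" by (rule card_mono) auto
  then show ?thesis unfolding degree_def by simp
qed

lemma sq_ip_nonneg: "0 \<le> (a::real) * a * ip n u u"
  by (rule mult_nonneg_nonneg[OF zero_le_square ip_self_nonneg])

lemma aux2: "(s::real) > 0 \<Longrightarrow> t > 0 \<Longrightarrow> s * (x / (s * s)) / t = x / (s * t)"
  by (simp add: field_simps)

theorem mainTheorem7:
  fixes n s :: nat and E :: "nat \<Rightarrow> nat \<Rightarrow> bool" and lam :: "nat \<Rightarrow> real"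
  assumes "simple_graph n E" and "connected_graph n E"
    and "\<And>i j. 1 \<le> i \<Longrightarrow> i \<le> j \<Longrightarrow> j \<le> n \<Longrightarrow> lam i \<le> lam j"
    and "char_poly (rw_laplacian n E) = (\<Prod>i\<in>{1..n}. [:- lam i, 1:])"
    and "2 \<le> s" and "s \<le> n"
  shows "col_sparse_norm (rw_laplacian n E) s \<ge> lam (s - 1)"
proof -
  note g = assms(1) and con = assms(2) and mono = assms(3) and cp = assms(4)
    and s2 = assms(5) and sn = assms(6)
  have n2: "2 \<le> n" using s2 sn by simp
  define L where "L = rw_laplacian n E"
  define d where "d = degree n E"
  define lf where "lf i j = L $$ (i,j)" for i j
  define nf where "nf i j = sqrt (d i) * lf i j / sqrt (d j)" for i j
  have Lc: "L \<in> carrier_mat n n" unfolding L_def by (rule L_carrier)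
  have d1: "\<And>r. r < n \<Longrightarrow> 1 \<le> d r" unfolding d_def using deg_ge1[OF g con n2] .
  have dn: "\<And>r. d r \<le> n" unfolding d_def by (rule deg_le)
  have dpos: "\<And>r. r < n \<Longrightarrow> 0 < d r"
  proof -
    fix r assume "r < n"
    then have "1 \<le> d r" by (rule d1)
    then show "0 < d r" by simp
  qed
  have sdpos: "\<And>r. r < n \<Longrightarrow> 0 < sqrt (d r)" using dpos by simp
  have Esym: "\<And>i j. E i j = E j i" using g unfolding simple_graph_def by blast
  have nf_sym: "\<And>r k. r < n \<Longrightarrow> k < n \<Longrightarrow> nf r k = nf k r"
  proof -
    fix r k assume r: "r < n" and k: "k < n"
    show "nf r k = nf k r"
    proof (cases "r = k")
      case True then show ?thesis by simp
    next
      case False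
      define x where "x = (if E r k then 1 else (0::real))"
      have x': "(if E k r then 1 else (0::real)) = x" unfolding x_def using Esym by simp
      have e1: "nf r k = sqrt (d r) * (- x / d r) / sqrt (d k)"
        unfolding nf_def lf_def L_def d_def using r k False by (simp add: L_idx x_def)
      have e2: "nf k r = sqrt (d k) * (- x / d k) / sqrt (d r)"
        unfolding nf_def lf_def L_def d_def using r k False x' by (simp add: L_idx)
      have "sqrt (d r) * (- x / d r) / sqrt (d k) = sqrt (d r) * (- x / (sqrt (d r) * sqrt (d r))) / sqrt (d k)"
        using dpos[OF r] by simp
      also have "\<dots> = - x / (sqrt (d r) * sqrt (d k))" by (rule aux2) (simp_all add: dpos r k)
      finally have f1: "nf r k = - x / (sqrt (d r) * sqrt (d k))" using e1 by simp
      have "sqrt (d k) * (- x / d k) / sqrt (d r) = sqrt (d k) * (- x / (sqrt (d k) * sqrt (d k))) / sqrt (d r)"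
        using dpos[OF k] by simp
      also have "\<dots> = - x / (sqrt (d k) * sqrt (d r))" by (rule aux2) (simp_all add: dpos r k)
      finally have f2: "nf k r = - x / (sqrt (d k) * sqrt (d r))" using e2 by simp
      show ?thesis using f1 f2 by (simp add: mult.commute)
    qed
  qed
  define Nm where "Nm = mat n n (\<lambda>(i,j). nf i j)"
  define Rm where "Rm = mat n n (\<lambda>(i,j). if i = j then sqrt (d i) else 0)"
  define Ri where "Ri = mat n n (\<lambda>(i,j). if i = j then 1 / sqrt (d i) else 0)"
  have Nmc: "Nm \<in> carrier_mat n n" unfolding Nm_def by simp
  have Rmc: "Rm \<in> carrier_mat n n" unfolding Rm_def by simp
  have Ric: "Ri \<in> carrier_mat n n" unfolding Ri_def by simp
  have RR1: "Rm * Ri = 1\<^sub>m n"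
  proof (rule eq_matI)
    fix i j assume "i < dim_row (1\<^sub>m n)" "j < dim_col (1\<^sub>m n)"
    then have ij: "i < n" "j < n" by auto
    have "(Rm * Ri) $$ (i, j) = sqrt (d i) * Ri $$ (i,j)"
      unfolding Rm_def by (rule diag_mult_left[OF Ric ij])
    then show "(Rm * Ri) $$ (i, j) = 1\<^sub>m n $$ (i, j)"
      using ij sdpos[OF ij(1)] sdpos[OF ij(2)] by (simp add: Ri_def)
  qed (use Rmc Ric in auto)
  have RR2: "Ri * Rm = 1\<^sub>m n"
  proof (rule eq_matI)
    fix i j assume "i < dim_row (1\<^sub>m n)" "j < dim_col (1\<^sub>m n)"
    then have ij: "i < n" "j < n" by auto
    have "(Ri * Rm) $$ (i, j) = 1 / sqrt (d i) * Rm $$ (i,j)"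
      unfolding Ri_def by (rule diag_mult_left[OF Rmc ij])
    then show "(Ri * Rm) $$ (i, j) = 1\<^sub>m n $$ (i, j)"
      using ij sdpos[OF ij(1)] sdpos[OF ij(2)] by (simp add: Rm_def)
  qed (auto simp: Ri_def Rm_def)
  have NRLR: "Nm = Rm * L * Ri"
  proof (rule eq_matI)
    fix i j assume "i < dim_row (Rm * L * Ri)" "j < dim_col (Rm * L * Ri)"
    then have ij: "i < n" "j < n" using Rmc Ric by auto
    have RL: "Rm * L \<in> carrier_mat n n" using Rmc Lc by simp
    have "(Rm * L * Ri) $$ (i,j) = (Rm * L) $$ (i,j) * (1 / sqrt (d j))"
      unfolding Ri_def by (rule diag_mult_right[OF RL ij])
    also have "(Rm * L) $$ (i,j) = sqrt (d i) * L $$ (i,j)"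
      unfolding Rm_def by (rule diag_mult_left[OF Lc ij])
    finally show "Nm $$ (i, j) = (Rm * L * Ri) $$ (i, j)"
      unfolding Nm_def nf_def lf_def using ij by simp
  qed (use Rmc Ric Nmc in auto)
  have "similar_mat_wit Nm L Rm Ri"
    unfolding similar_mat_wit_def Let_def using Nmc Lc Rmc Ric RR1 RR2 NRLR by auto
  then have "similar_mat Nm L" unfolding similar_mat_def by blast
  then have cpN: "char_poly Nm = char_poly L" by (rule char_poly_similar)
  define es where "es = map lam [1..<Suc n]"
  have cpes: "char_poly Nm = (\<Prod>e\<leftarrow>es. [:- e, 1:])"
  proof -
    have eqs: "set [1..<Suc n] = {1..n}" using n2 by auto
    have "(\<Prod>i\<in>{1..n}. [:- lam i, 1:]) = (\<Prod>i\<in>set [1..<Suc n]. [:- lam i, 1:])"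
      by (simp only: eqs)
    also have "\<dots> = prod_list (map (\<lambda>i. [:- lam i, 1:]) [1..<Suc n])"
      by (rule prod.distinct_set_conv_list) simp
    also have "\<dots> = (\<Prod>e\<leftarrow>es. [:- e, 1:])" unfolding es_def by (simp add: comp_def)
    finally show ?thesis using cpN cp unfolding L_def by simp
  qed
  obtain B P Q where sd: "schur_decomposition Nm es = (B, P, Q)" by (cases "schur_decomposition Nm es") auto
  from schur_decomposition[OF Nmc cpes sd]
  have wit: "similar_mat_wit Nm B P Q" and ut: "upper_triangular B" and dg: "diag_mat B = es" by auto
  have Bc: "B \<in> carrier_mat n n" and Pc: "P \<in> carrier_mat n n" and Qc: "Q \<in> carrier_mat n n"
    and PQ: "P * Q = 1\<^sub>m n" and QP: "Q * P = 1\<^sub>m n" and NPBQ: "Nm = P * B * Q"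
    using wit Nmc unfolding similar_mat_wit_def Let_def by auto
  have NP: "Nm * P = P * B"
  proof -
    have "Nm * P = P * B * Q * P" using NPBQ by simp
    also have "\<dots> = P * B * (Q * P)" using Pc Bc Qc by (simp add: assoc_mult_mat[of _ n n _ n _ n])
    also have "\<dots> = P * B" using QP Pc Bc by simp
    finally show ?thesis .
  qed
  define p where "p j r = P $$ (r,j)" for j r
  define b where "b k j = B $$ (k,j)" for k j
  have AP: "\<And>r j. r < n \<Longrightarrow> j < n \<Longrightarrow> Nv n nf (p j) r = (\<Sum>k<n. b k j * p k r)"
  proof -
    fix r j assume r: "r < n" and j: "j < n"
    have "Nv n nf (p j) r = (Nm * P) $$ (r,j)"
      unfolding Nv_def p_def by (subst mult_idx[OF Nmc Pc r j], rule sum.cong) (use r in \<open>auto simp: Nm_def\<close>)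
    also have "\<dots> = (P * B) $$ (r,j)" by (simp add: NP)
    also have "\<dots> = (\<Sum>k<n. b k j * p k r)"
      by (subst mult_idx[OF Pc Bc r j]) (auto simp: b_def p_def mult.commute)
    finally show "Nv n nf (p j) r = (\<Sum>k<n. b k j * p k r)" .
  qed
  have UT: "\<And>i j. i < n \<Longrightarrow> j < i \<Longrightarrow> b i j = 0"
    using ut Bc unfolding upper_triangular_def b_def by auto
  have inj: "\<And>c. (\<And>r. r < n \<Longrightarrow> (\<Sum>j<n. c j * p j r) = 0) \<Longrightarrow> \<forall>j<n. c j = 0"
  proof (intro allI impI)
    fix c :: "nat \<Rightarrow> real" and i assume h: "\<And>r. r < n \<Longrightarrow> (\<Sum>j<n. c j * p j r) = 0" and i: "i < n"
    have "c i = (\<Sum>j<n. (if j = i then c j else 0))" using i by simp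
    also have "\<dots> = (\<Sum>j<n. (Q * P) $$ (i,j) * c j)" by (rule sum.cong) (use i QP in auto)
    also have "\<dots> = (\<Sum>j<n. (\<Sum>r<n. Q $$ (i,r) * P $$ (r,j)) * c j)"
      by (rule sum.cong[OF refl]) (simp add: mult_idx[OF Qc Pc i])
    also have "\<dots> = (\<Sum>j<n. \<Sum>r<n. Q $$ (i,r) * (c j * P $$ (r,j)))"
      by (simp add: sum_distrib_left sum_distrib_right mult.commute mult.left_commute)
    also have "\<dots> = (\<Sum>r<n. \<Sum>j<n. Q $$ (i,r) * (c j * P $$ (r,j)))"
      by (rule sum.swap)
    also have "\<dots> = (\<Sum>r<n. Q $$ (i,r) * (\<Sum>j<n. c j * p j r))"
      unfolding p_def by (simp add: sum_distrib_left)
    also have "\<dots> = 0" using h by simp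
    finally show "c i = 0" .
  qed
  define q where "q = gsq n p"
  have SG: "\<And>j. j < n \<Longrightarrow> (\<forall>i<j. ip n (q i) (q j) = 0) \<and> ip n (q j) (q j) > 0 \<and>
     spn n p j (\<lambda>r. q j r - p j r) \<and> (\<forall>r<n. Nv n nf (q j) r = b j j * q j r)"
    unfolding q_def by (rule spectral_gs[OF nf_sym AP UT inj]) auto
  have qorth: "\<And>i j. i < n \<Longrightarrow> j < n \<Longrightarrow> i \<noteq> j \<Longrightarrow> ip n (q i) (q j) = 0"
  proof -
    fix i j assume "i < n" "j < n" "i \<noteq> j"
    then show "ip n (q i) (q j) = 0"
    proof (cases "i < j")
      case True then show ?thesis using SG[OF \<open>j < n\<close>] by blast
    next
      case False then have "j < i" using \<open>i \<noteq> j\<close> by simp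
      then have "ip n (q j) (q i) = 0" using SG[OF \<open>i < n\<close>] by blast
      then show ?thesis by (simp add: ip_comm)
    qed
  qed
  have qpos: "\<And>j. j < n \<Longrightarrow> ip n (q j) (q j) > 0" using SG by blast
  have bjj: "\<And>j. j < n \<Longrightarrow> b j j = lam (Suc j)"
  proof -
    fix j assume j: "j < n"
    have "b j j = diag_mat B ! j" unfolding diag_mat_def b_def using j Bc by simp
    also have "\<dots> = lam (1 + j)" unfolding dg es_def using j by (intro nth_map_upt) simp
    finally show "b j j = lam (Suc j)" by simp
  qed
  have qev: "\<And>j r. j < n \<Longrightarrow> r < n \<Longrightarrow> Nv n nf (q j) r = lam (Suc j) * q j r"
    using SG bjj by auto
  define k where "k = n - s + 1"
  define qq where "qq b = q (s - 1 + b)" for b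
  have qqn: "\<And>b. b < k \<Longrightarrow> s - 1 + b < n" unfolding k_def using s2 sn by auto
  define Mk where "Mk = mat\<^sub>r k k (\<lambda>a. if a = k - 1 then 0\<^sub>v k else vec k (\<lambda>b. qq b (s + a)))"
  have Mkc: "Mk \<in> carrier_mat k k" unfolding Mk_def by simp
  have "det Mk = 0" unfolding Mk_def by (rule det_row_0) (auto simp: k_def)
  then obtain v where v: "v \<in> carrier_vec k" "v \<noteq> 0\<^sub>v k" "Mk *\<^sub>v v = 0\<^sub>v k"
    using det_0_iff_vec_prod_zero_field[OF Mkc] by blast
  have vker: "\<And>a. a < k - 1 \<Longrightarrow> (\<Sum>b<k. qq b (s + a) * v $ b) = 0"
  proof -
    fix a assume a: "a < k - 1"
    then have ak: "a < k" by simp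
    have "0 = (Mk *\<^sub>v v) $ a" using v(3) ak by simp
    also have "\<dots> = (\<Sum>b<k. Mk $$ (a,b) * v $ b)" by (rule mult_vec_idx[OF _ v(1) ak]) (rule Mkc)
    also have "\<dots> = (\<Sum>b<k. qq b (s + a) * v $ b)"
      by (rule sum.cong) (use a in \<open>auto simp: Mk_def\<close>)
    finally show "(\<Sum>b<k. qq b (s + a) * v $ b) = 0" by simp
  qed
  define y where "y r = (\<Sum>b\<in>{..<k}. v $ b * qq b r)" for r
  have ysupp: "\<And>r. s \<le> r \<Longrightarrow> r < n \<Longrightarrow> y r = 0"
  proof -
    fix r assume r: "s \<le> r" "r < n"
    define a where "a = r - s"
    have a: "a < k - 1" "s + a = r" using r unfolding a_def k_def by auto
    show "y r = 0" unfolding y_def using vker[OF a(1)] a(2) by (simp add: mult.commute)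
  qed
  have qqorth: "\<And>i j. i \<in> {..<k} \<Longrightarrow> j \<in> {..<k} \<Longrightarrow> i \<noteq> j \<Longrightarrow> ip n (qq i) (qq j) = 0"
    unfolding qq_def using qorth qqn by auto
  have Yeq: "ip n y y = (\<Sum>b\<in>{..<k}. v $ b * v $ b * ip n (qq b) (qq b))"
    unfolding y_def by (rule orth_expand[OF _ qqorth]) auto
  obtain b0 where b0: "b0 < k" "v $ b0 \<noteq> 0"
  proof -
    have "\<exists>b<k. v $ b \<noteq> 0"
    proof (rule ccontr)
      assume "\<not> (\<exists>b<k. v $ b \<noteq> 0)"
      then have "v = 0\<^sub>v k" using v(1) by (intro eq_vecI) auto
      then show False using v(2) by simp
    qed
    then show ?thesis using that by blast
  qed
  have Ypos: "ip n y y > 0"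
  proof -
    have vv: "0 < v $ b0 * v $ b0" using b0(2) by (cases "v $ b0 > 0") (auto simp: zero_less_mult_iff)
    have "0 < v $ b0 * v $ b0 * ip n (qq b0) (qq b0)"
      using vv qpos[OF qqn[OF b0(1)]] unfolding qq_def by (rule mult_pos_pos)
    also have "\<dots> \<le> (\<Sum>b\<in>{..<k}. v $ b * v $ b * ip n (qq b) (qq b))"
      by (rule member_le_sum) (use b0 in \<open>auto simp: sq_ip_nonneg\<close>)
    finally show ?thesis using Yeq by simp
  qed
  have Ny: "\<And>r. r < n \<Longrightarrow> Nv n nf y r = (\<Sum>b\<in>{..<k}. (v $ b * lam (s + b)) * qq b r)"
  proof -
    fix r assume r: "r < n"
    have "Nv n nf y r = (\<Sum>b\<in>{..<k}. v $ b * Nv n nf (qq b) r)"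
      unfolding y_def by (rule Nv_sum)
    also have "\<dots> = (\<Sum>b\<in>{..<k}. (v $ b * lam (s + b)) * qq b r)"
    proof (rule sum.cong[OF refl])
      fix b assume "b \<in> {..<k}"
      then have "s - 1 + b < n" using qqn by simp
      moreover have "Suc (s - 1 + b) = s + b" using s2 by simp
      ultimately show "v $ b * Nv n nf (qq b) r = (v $ b * lam (s + b)) * qq b r"
        unfolding qq_def using qev r by simp
    qed
    finally show "Nv n nf y r = (\<Sum>b\<in>{..<k}. (v $ b * lam (s + b)) * qq b r)" .
  qed
  have ray: "ip n (Nv n nf y) y \<ge> lam (s - 1) * ip n y y"
  proof -
    have "ip n (Nv n nf y) y = ip n (\<lambda>r. \<Sum>b\<in>{..<k}. (v $ b * lam (s + b)) * qq b r) (\<lambda>r. \<Sum>b\<in>{..<k}. v $ b * qq b r)"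
      by (rule ip_cong) (auto simp: Ny y_def)
    also have "\<dots> = (\<Sum>b\<in>{..<k}. (v $ b * lam (s + b)) * v $ b * ip n (qq b) (qq b))"
      by (rule orth_expand[OF _ qqorth]) auto
    also have "\<dots> \<ge> (\<Sum>b\<in>{..<k}. lam (s - 1) * (v $ b * v $ b * ip n (qq b) (qq b)))"
    proof (rule sum_mono)
      fix b assume b: "b \<in> {..<k}"
      have "lam (s - 1) \<le> lam (s + b)" using b s2 sn by (intro mono) (auto simp: k_def)
      moreover have "0 \<le> v $ b * v $ b * ip n (qq b) (qq b)" by (simp add: ip_self_nonneg)
      ultimately have le1: "lam (s - 1) * (v $ b * v $ b * ip n (qq b) (qq b)) \<le> lam (s + b) * (v $ b * v $ b * ip n (qq b) (qq b))"
        by (rule mult_right_mono)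
      have eq1: "(v $ b * lam (s + b)) * v $ b * ip n (qq b) (qq b) = lam (s + b) * (v $ b * v $ b * ip n (qq b) (qq b))"
        by (simp add: algebra_simps)
      show "lam (s - 1) * (v $ b * v $ b * ip n (qq b) (qq b)) \<le> (v $ b * lam (s + b)) * v $ b * ip n (qq b) (qq b)"
        by (subst eq1) (rule le1)
    qed
    finally show ?thesis using Yeq by (simp add: sum_distrib_left)
  qed
  define Ms where "Ms = submatrix L UNIV {0..<s}"
  have cardn: "card {i. i < n \<and> i \<in> (UNIV :: nat set)} = n" by simp
  have cards: "card {j. j < n \<and> j \<in> {0..<s}} = s"
  proof -
    have "{j. j < n \<and> j \<in> {0..<s}} = {0..<s}" using sn by auto
    then show ?thesis by simp
  qed
  have Msc: "Ms \<in> carrier_mat n s" unfolding Ms_def carrier_mat_def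
    using Lc cardn cards by (simp add: dim_submatrix)
  have Msidx: "\<And>i j. i < n \<Longrightarrow> j < s \<Longrightarrow> Ms $$ (i,j) = L $$ (i,j)"
  proof -
    fix i j assume i: "i < n" and j: "j < s"
    have "Ms $$ (i,j) = L $$ (pick UNIV i, pick {0..<s} j)"
      unfolding Ms_def by (rule submatrix_index) (use Lc cardn cards i j in auto)
    then show "Ms $$ (i,j) = L $$ (i,j)" using pick_init[OF j] by (simp add: pick_UNIV)
  qed
  define A where "A = spectral_norm Ms"
  have A0: "A \<ge> 0" unfolding A_def by (rule spectral_nonneg[OF Msc]) (use s2 in simp)
  have Gb: "\<And>w. ip n (Rop s lf w) (Rop s lf w) \<le> A^2 * ip n w w"
  proof -
    fix w :: "nat \<Rightarrow> real"
    define x where "x = vec s w"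
    have xc: "x \<in> carrier_vec s" unfolding x_def by simp
    have Mx: "\<And>i. i < n \<Longrightarrow> (Ms *\<^sub>v x) $ i = (\<Sum>k<s. lf i k * w k)"
      by (subst mult_vec_idx[OF Msc xc], simp, rule sum.cong) (auto simp: Msidx lf_def x_def)
    have nb: "vec_norm2 (Ms *\<^sub>v x) \<le> A * vec_norm2 x" unfolding A_def by (rule spectral_bound[OF Msc xc])
    have "(vec_norm2 (Ms *\<^sub>v x))^2 \<le> (A * vec_norm2 x)^2"
      by (rule power_mono[OF nb vec_norm2_nonneg])
    then have sq: "(Ms *\<^sub>v x) \<bullet> (Ms *\<^sub>v x) \<le> A^2 * (x \<bullet> x)"
      by (simp add: vec_norm2_sq power_mult_distrib)
    have "ip n (Rop s lf w) (Rop s lf w) \<le> (\<Sum>r<n. (Ms *\<^sub>v x) $ r * (Ms *\<^sub>v x) $ r)"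
      unfolding ip_def by (rule sum_mono) (auto simp: Rop_def Mx)
    also have "\<dots> = (Ms *\<^sub>v x) \<bullet> (Ms *\<^sub>v x)" using Msc by (simp add: sprod_sum)
    also have "\<dots> \<le> A^2 * (x \<bullet> x)" by (rule sq)
    also have "x \<bullet> x = (\<Sum>k<s. w k * w k)" unfolding x_def by (simp add: sprod_sum)
    also have "\<dots> \<le> ip n w w" unfolding ip_def
      by (rule sum_mono2) (use sn in auto)
    finally show "ip n (Rop s lf w) (Rop s lf w) \<le> A^2 * ip n w w" by (simp add: mult_left_mono)
  qed
  have muA: "lam (s - 1) \<le> A"
    by (rule power_argument[OF sn _ d1 _ nf_sym Gb ysupp Ypos ray A0])
       (auto simp: nf_def dn)
  have fin: "finite {spectral_norm (submatrix L UNIV S) | S. S \<subseteq> {0..<dim_col L} \<and> card S = s}"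
  proof -
    have "{spectral_norm (submatrix L UNIV S) | S. S \<subseteq> {0..<dim_col L} \<and> card S = s}
        = (\<lambda>S. spectral_norm (submatrix L UNIV S)) ` {S. S \<subseteq> {0..<dim_col L} \<and> card S = s}" by blast
    moreover have "finite {S. S \<subseteq> {0..<dim_col L} \<and> card S = s}"
      by (rule finite_subset[of _ "Pow {0..<dim_col L}"]) auto
    ultimately show ?thesis by simp
  qed
  have mem: "A \<in> {spectral_norm (submatrix L UNIV S) | S. S \<subseteq> {0..<dim_col L} \<and> card S = s}"
    unfolding A_def Ms_def using Lc sn by auto
  have "A \<le> col_sparse_norm L s" unfolding col_sparse_norm_def by (rule Max_ge[OF fin mem])
  then show ?thesis using muA unfolding L_def by simp
qed

end
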